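(* Let $\theta\in\mathbb{R}$, $\chi\in\mathbb{R}\setminus\{0\}$, $\tilde M=\begin{bmatrix}\cos\theta&\chi\sin\theta\\-\chi^{-1}\sin\theta&\cos\theta\end{bmatrix}$, let $n\ge0$ be an integer, $(q_0,p_0)\in\mathbb{R}^2$, $(q_n,p_n)^T=\tilde M^n(q_0,p_0)^T$, $H(q,p)=\frac12(p^2+q^2)$ and $\Delta(q_0,p_0)=H(q_n,p_n)-H(q_0,p_0)$. If $\chi^2\ge1$ then $\Delta(q_0,p_0)\le\frac12(\chi^2-1)p_0^2$; if $\chi^2\le1$ then $\Delta(q_0,p_0)\le\frac12(\chi^{-2}-1)q_0^2$. These bounds are uniform in $n$.
   Context: $\tilde M$ is the one-step matrix of a consistent reversible volume-preserving integrator applied with a stable step size $h$ to the harmonic oscillator $dq/dt=p$, $dp/dt=-q$ (there $\theta=\theta_h$, $\chi=\chi_h$). *)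

theory Defs
  imports "HOL-Analysis.Analysis"
begin

definition Mtilde :: "real \<Rightarrow> real \<Rightarrow> real^2^2" where
  "Mtilde t c = vector [vector [cos t, c * sin t],
                          vector [- (inverse c) * sin t, cos t]]"

definition matpow :: "real^2^2 \<Rightarrow> nat \<Rightarrow> real^2^2" where
  "matpow M n = (((**) M) ^^ n) (mat 1)"

definition H :: "real \<Rightarrow> real \<Rightarrow> real" where
  "H q p = (p^2 + q^2) / 2"

end

theory Submission
  imports Defs
begin

lemma Mt_entries:
  "Mtilde t c $ 1 $ 1 = cos t" "Mtilde t c $ 1 $ 2 = c * sin t"
  "Mtilde t c $ 2 $ 1 = - (inverse c) * sin t" "Mtilde t c $ 2 $ 2 = cos t"
  by (simp_all add: Mtilde_def)

lemma Mt_mult: "Mtilde t c ** Mtilde s c = Mtilde (t + s) c" if "c \<noteq> 0"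
  using that
  by (simp add: vec_eq_iff forall_2 matrix_matrix_mult_def sum_2 Mt_entries
      cos_add sin_add field_simps)

lemma Mt_zero: "Mtilde 0 c = mat 1"
  by (simp add: vec_eq_iff forall_2 Mt_entries mat_def)

lemma matpow_Mt: "c \<noteq> 0 \<Longrightarrow> matpow (Mtilde t c) n = Mtilde (real n * t) c"
proof (induction n)
  case 0 then show ?case by (simp add: matpow_def Mt_zero)
next
  case (Suc n)
  have "matpow (Mtilde t c) (Suc n) = Mtilde t c ** matpow (Mtilde t c) n"
    by (simp add: matpow_def)
  also have "\<dots> = Mtilde (real (Suc n) * t) c" using Suc
    by (simp add: Mt_mult distrib_right add.commute)
  finally show ?case .
qed

lemma l1: "(c::real)^2 > 0 \<Longrightarrow> c^2 \<le> 1 \<Longrightarrow> (x::real)^2 \<le> x^2 / c^2"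
  by (simp add: le_divide_eq mult_left_le)
lemma l2: "(c::real)^2 > 0 \<Longrightarrow> (x::real)^2 \<le> x^2 / c^2 \<Longrightarrow> x^2 + y^2 \<le> (x^2 + c^2*y^2)/c^2"
  by (simp add: add_divide_distrib)
lemma l3: "(c::real)^2 > 0 \<Longrightarrow> x^2 + c^2*y^2 = q^2 + c^2*p^2 \<Longrightarrow> (x^2 + c^2*y^2)/c^2 = q^2/c^2 + p^2"
  by (simp add: add_divide_distrib)
lemma two: "2 * ((x::real) / 2) = x" by simp
lemma a: "2 * (((c::real)^2 - 1) * p0^2 / 2) = c^2 * p0^2 - p0^2" 
  unfolding two by (simp only: left_diff_distrib mult_1)
lemma l4: "2 * ((inverse ((c::real)^2) - 1) * q^2 / 2) = q^2 / c^2 - q^2"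
  unfolding two by (simp only: left_diff_distrib mult_1 divide_inverse mult.commute[of "inverse _"])

lemma H2: "2 * (H a b - H c d) = a^2 + b^2 - c^2 - d^2"
proof -
  have "2 * (H a b - H c d) = 2 * ((b^2 + a^2) / 2) - 2 * ((d^2+c^2)/2)" unfolding H_def by (simp only: right_diff_distrib)
  also have "\<dots> = (b^2 + a^2) - (d^2+c^2)" by (simp only: times_divide_eq_right nonzero_mult_div_cancel_left zero_neq_numeral not_False_eq_True)
  finally show ?thesis by simp
qed

theorem proposition6p2:
  fixes t c q0 p0 :: real and n :: nat
  assumes "c \<noteq> 0"
  defines "z \<equiv> matpow (Mtilde t c) n *v vector [q0, p0]"
  defines "\<Delta> \<equiv> H (z $ 1) (z $ 2) - H q0 p0"
  shows "(c^2 \<ge> 1 \<longrightarrow> \<Delta> \<le> (c^2 - 1) * p0^2 / 2)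
       \<and> (c^2 \<le> 1 \<longrightarrow> \<Delta> \<le> (inverse (c^2) - 1) * q0^2 / 2)"
proof -
  define a where "a = real n * t"
  have z1: "z $ 1 = cos a * q0 + c * sin a * p0"
    and z2: "z $ 2 = - (inverse c) * sin a * q0 + cos a * p0"
    unfolding z_def a_def using assms(1)
    by (simp_all add: matpow_Mt matrix_vector_mult_def sum_2 Mt_entries)
  have inv: "(z$1)^2 + c^2 * (z$2)^2 = q0^2 + c^2 * p0^2"
  proof -
    have "(z$1)^2 + c^2 * (z$2)^2 = (cos a * q0 + c * sin a * p0)^2 + (- sin a * q0 + c * cos a * p0)^2"
      using assms(1) by (simp add: z1 z2 power2_eq_square field_simps)
    also have "\<dots> = ((sin a)^2 + (cos a)^2) * (q0^2 + c^2 * p0^2)"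
      by algebra
    also have "\<dots> = q0^2 + c^2 * p0^2" by simp
    finally show ?thesis .
  qed
  have c2: "c^2 > 0" using assms(1) by simp
  show ?thesis
  proof (intro conjI impI)
    assume "c^2 \<ge> 1"
    hence "(z$2)^2 \<le> c^2 * (z$2)^2" using mult_right_mono[of 1 "c^2" "(z$2)^2"] by simp
    thus "\<Delta> \<le> (c^2 - 1) * p0^2 / 2" 
    proof -
      have "2 * \<Delta> = (z$1)^2 + (z$2)^2 - q0^2 - p0^2" unfolding \<Delta>_def by (rule H2)
      moreover have "2 * ((c^2 - 1) * p0^2 / 2) = c^2 * p0^2 - p0^2" by (rule a)
      ultimately show ?thesis using inv \<open>(z$2)^2 \<le> c^2 * (z$2)^2\<close> by linarith
    qed
  next
    assume h: "c^2 \<le> 1"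
    have "(z$1)^2 \<le> (z$1)^2 / c^2"
      using c2 h by (rule l1)
    hence "(z$1)^2 + (z$2)^2 \<le> ((z$1)^2 + c^2 * (z$2)^2) / c^2" by (rule l2[OF c2])
    also have "\<dots> = q0^2 / c^2 + p0^2" by (rule l3[OF c2 inv])
    finally have A: "(z$1)^2 + (z$2)^2 \<le> q0^2 / c^2 + p0^2" .
    have B: "2 * \<Delta> = (z$1)^2 + (z$2)^2 - q0^2 - p0^2" unfolding \<Delta>_def by (rule H2)
    have C: "2 * ((inverse (c^2) - 1) * q0^2 / 2) = q0^2 / c^2 - q0^2"
      by (rule l4)
    show "\<Delta> \<le> (inverse (c^2) - 1) * q0^2 / 2" using A B C by linarith
  qed
qed

end
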